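(* Let $n=2$, let $\mathcal{D}$ be the set of strictly positive piecewise-constant functions $[0,1]\to\mathbb{R}_{>0}$, and let $\mathcal{M}$ be a truthful proportional mechanism on $\mathcal{D}\times\mathcal{D}$. Let $X_1=\mathcal{M}_1(F^1)$, $X_2=\mathcal{M}_2(F^1)$ where $F^1$ is the profile of two constant-$1$ densities (assume $X_1,X_2$ are finite unions of intervals). Fix $\varepsilon\in(0,\frac12)$ and let $F^3=(f_1^3,f_2^3)$ where $f_1^3=\frac12$ on $X_1$ and $1$ on $X_2$, and $f_2^3=\varepsilon$ on $X_1$ and $1$ on $X_2$. Then $$|\mathcal{M}_1(F^3)\cap X_1|=|\mathcal{M}_1(F^3)\cap X_2|=|\mathcal{M}_2(F^3)\cap X_1|=|\mathcal{M}_2(F^3)\cap X_2|=\tfrac14.$$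
   Context: Agent $i$'s utility for a measurable $X\subseteq[0,1]$ is $v_i(X)=\int_X f_i$; $|X|$ denotes Lebesgue measure. An allocation is a pair of disjoint measurable subsets of $[0,1]$ (not necessarily covering $[0,1]$); $\mathcal{M}_i(F)$ is agent $i$'s piece. Proportional: $v_i(\mathcal{M}_i(F))\ge\frac12 v_i([0,1])$ for each $i$ w.r.t. the reported densities. Truthful: for each agent $i$, any profile and any alternative report $f_i'$ in the domain, agent $i$'s utility (w.r.t. the true $f_i$) from the truthful report is at least that from reporting $f_i'$, the other agent's report held fixed. *)

theory Defs
  imports "HOL-Analysis.Analysis"
begin

text \<open>A density reported by an agent is a function real => real; only its values on [0,1] matter.\<close>

definition piecewise_constant_01 :: "(real \<Rightarrow> real) \<Rightarrow> bool" where
  "piecewise_constant_01 f \<longleftrightarrow>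
     (\<exists>S. finite S \<and> {0, 1} \<subseteq> S \<and> S \<subseteq> {0..1} \<and>
          (\<forall>a\<in>S. \<forall>b\<in>S. a < b \<and> {a<..<b} \<inter> S = {} \<longrightarrow>
              (\<exists>c. \<forall>x\<in>{a<..<b}. f x = c)))"

definition pc_domain :: "(real \<Rightarrow> real) set" where
  "pc_domain = {f. piecewise_constant_01 f \<and> (\<forall>x\<in>{0..1}. f x > 0)}"

definition util :: "(real \<Rightarrow> real) \<Rightarrow> real set \<Rightarrow> real" where
  "util f X = (LINT x:X|lebesgue. f x)"

definition is_allocation :: "real set \<times> real set \<Rightarrow> bool" where
  "is_allocation A \<longleftrightarrow> fst A \<in> sets lebesgue \<and> snd A \<in> sets lebesgue \<and>
     fst A \<subseteq> {0..1} \<and> snd A \<subseteq> {0..1} \<and> fst A \<inter> snd A = {}"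

type_synonym mechanism = "(real \<Rightarrow> real) \<Rightarrow> (real \<Rightarrow> real) \<Rightarrow> real set \<times> real set"

definition valid_mechanism :: "(real \<Rightarrow> real) set \<Rightarrow> mechanism \<Rightarrow> bool" where
  "valid_mechanism D M \<longleftrightarrow> (\<forall>f1\<in>D. \<forall>f2\<in>D. is_allocation (M f1 f2))"

definition proportional :: "(real \<Rightarrow> real) set \<Rightarrow> mechanism \<Rightarrow> bool" where
  "proportional D M \<longleftrightarrow> (\<forall>f1\<in>D. \<forall>f2\<in>D.
      util f1 (fst (M f1 f2)) \<ge> util f1 {0..1} / 2 \<and>
      util f2 (snd (M f1 f2)) \<ge> util f2 {0..1} / 2)"

definition truthful :: "(real \<Rightarrow> real) set \<Rightarrow> mechanism \<Rightarrow> bool" where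
  "truthful D M \<longleftrightarrow>
     (\<forall>f1\<in>D. \<forall>f1'\<in>D. \<forall>f2\<in>D. util f1 (fst (M f1 f2)) \<ge> util f1 (fst (M f1' f2))) \<and>
     (\<forall>f1\<in>D. \<forall>f2\<in>D. \<forall>f2'\<in>D. util f2 (snd (M f1 f2)) \<ge> util f2 (snd (M f1 f2')))"

definition finite_union_of_intervals :: "real set \<Rightarrow> bool" where
  "finite_union_of_intervals X \<longleftrightarrow>
     (\<exists>I. finite I \<and> (\<forall>J\<in>I. is_interval J) \<and> X = \<Union>I)"

end

theory Submission
  imports Defs
begin


lemma interval_sup_between:
  fixes J :: "real set"
  assumes "is_interval J" "x \<in> J" "y \<notin> J" "x < y"
  shows "x \<le> Sup J \<and> Sup J \<le> y"
proof -
  have b: "\<forall>z\<in>J. z \<le> y"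
  proof (rule ccontr)
    assume "\<not> (\<forall>z\<in>J. z \<le> y)"
    then obtain z where "z \<in> J" "z > y" by auto
    then have "y \<in> J" using assms unfolding is_interval_1 by (meson less_imp_le)
    then show False using assms by simp
  qed
  have "x \<le> Sup J" using b assms by (intro cSup_upper) (auto simp: bdd_above_def)
  moreover have "Sup J \<le> y" using b assms by (intro cSup_least) auto
  ultimately show ?thesis by simp
qed

lemma interval_inf_between:
  fixes J :: "real set"
  assumes "is_interval J" "x \<in> J" "y \<notin> J" "y < x"
  shows "y \<le> Inf J \<and> Inf J \<le> x"
proof -
  have b: "\<forall>z\<in>J. y \<le> z"
  proof (rule ccontr)
    assume "\<not> (\<forall>z\<in>J. y \<le> z)"
    then obtain z where "z \<in> J" "z < y" by auto
    then have "y \<in> J" using assms unfolding is_interval_1 by (meson less_imp_le)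
    then show False using assms by simp
  qed
  have "Inf J \<le> x" using b assms by (intro cInf_lower) (auto simp: bdd_below_def)
  moreover have "y \<le> Inf J" using b assms by (intro cInf_greatest) auto
  ultimately show ?thesis by simp
qed

lemma pc_ind:
  assumes "finite_union_of_intervals X"
  shows "piecewise_constant_01 (\<lambda>x. if x \<in> X then c else d)"
proof -
  obtain I where I: "finite I" "\<forall>J\<in>I. is_interval J" "X = \<Union>I"
    using assms unfolding finite_union_of_intervals_def by blast
  define S where "S = {0,1} \<union> ((\<Union>J\<in>I. {Inf J, Sup J}) \<inter> {0..1::real})"
  have fS: "finite S" unfolding S_def using I(1) by auto
  have S01: "{0,1} \<subseteq> S" "S \<subseteq> {0..1}" unfolding S_def by auto
  have key: "y \<in> X" if ab: "a \<in> S" "b \<in> S" "a < b" "{a<..<b} \<inter> S = {}"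
     and xy: "x \<in> {a<..<b}" "y \<in> {a<..<b}" "x \<in> X" for a b x y
  proof (rule ccontr)
    assume ny: "y \<notin> X"
    obtain J where J: "J \<in> I" "x \<in> J" using xy I by auto
    have yJ: "y \<notin> J" using ny J I by auto
    have a0: "0 \<le> a" "b \<le> 1" using ab S01 by auto
    have "x \<noteq> y" using xy ny by auto
    then consider "x < y" | "y < x" by linarith
    then show False
    proof cases
      case 1
      then have "x \<le> Sup J \<and> Sup J \<le> y" using interval_sup_between[OF _ J(2) yJ] J I by auto
      then have "Sup J \<in> {a<..<b}" "Sup J \<in> S" using xy a0 J unfolding S_def by auto
      then show False using ab by blast
    next
      case 2
      then have "y \<le> Inf J \<and> Inf J \<le> x" using interval_inf_between[OF _ J(2) yJ] J I by auto
      then have "Inf J \<in> {a<..<b}" "Inf J \<in> S" using xy a0 J unfolding S_def by auto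
      then show False using ab by blast
    qed
  qed
  show ?thesis unfolding piecewise_constant_01_def
  proof (intro exI[of _ S] conjI fS S01 ballI impI)
    fix a b assume a: "a \<in> S" "b \<in> S" "a < b \<and> {a<..<b} \<inter> S = {}"
    let ?m = "(a+b)/2"
    have m: "?m \<in> {a<..<b}" using a by auto
    show "\<exists>c'. \<forall>x\<in>{a<..<b}. (if x \<in> X then c else d) = c'"
    proof (intro exI[of _ "if ?m \<in> X then c else d"] ballI)
      fix x assume x: "x \<in> {a<..<b}"
      have "x \<in> X \<longleftrightarrow> ?m \<in> X" using key[OF a(1,2) _ _ x m] key[OF a(1,2) _ _ m x] a(3) by blast
      then show "(if x \<in> X then c else d) = (if ?m \<in> X then c else d)" by simp
    qed
  qed
qed

lemma arith_core:
  fixes a1 a2 b1 b2 e :: real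
  assumes P1: "(a1+a2) - (1 - 1/2) * a1 \<ge> (1 - (1 - 1/2) * (1/2)) / 2"
    and P2: "(b1+b2) - (1-e) * b1 \<ge> (1 - (1-e) * (1/2)) / 2"
    and T: "a1 + a2 \<le> 1/2" and D1: "a1 + b1 \<le> 1/2" and D2: "a2 + b2 \<le> 1/2"
    and e: "0 < e" "e < 1/2"
  shows "a1 = 1/4 \<and> a2 = 1/4 \<and> b1 = 1/4 \<and> b2 = 1/4"
proof -
  have P1': "a1/2 + a2 \<ge> 3/8" using P1 by (simp add: algebra_simps)
  have ha2: "a2 \<ge> 1/4" using P1' T by linarith
  have P2': "e*b1 + b2 \<ge> (1+e)/4" using P2 by (simp add: algebra_simps divide_simps)
  have Q: "b1/2 + b2 \<le> 3/8" using P1' D1 D2 by linarith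
  have "(1/2-e)*b1 \<le> (1/2-e)*(1/4)" using P2' Q by (simp add: algebra_simps divide_simps)
  then have hb1: "b1 \<le> 1/4" using e by (simp add: mult_le_cancel_left_pos)
  have "e*b1 \<le> e*(1/4)" using hb1 e by (intro mult_left_mono) auto
  then have hb2: "b2 \<ge> 1/4" using P2' by (simp add: divide_simps)
  have a2: "a2 = 1/4" "b2 = 1/4" using ha2 hb2 D2 by linarith+
  have a1: "a1 = 1/4" using P1' T a2 D1 by linarith
  have "e*b1 \<ge> e*(1/4)" using P2' a2 by (simp add: divide_simps algebra_simps)
  then have "b1 \<ge> 1/4" using e by (simp add: mult_le_cancel_left_pos)
  then show ?thesis using a1 a2 hb1 by linarith
qed

lemma sub01: "A \<subseteq> {0..1::real} \<Longrightarrow> A \<in> sets lebesgue \<Longrightarrow> A \<in> lmeasurable"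
proof -
  assume a: "A \<subseteq> {0..1::real}" "A \<in> sets lebesgue"
  have "{0..1::real} \<in> lmeasurable" by simp
  from fmeasurableI2[OF this a] show ?thesis .
qed

lemma util_ind:
  assumes A: "A \<in> sets lebesgue" "A \<subseteq> {0..1}" and X: "X \<in> sets lebesgue"
  shows "util (\<lambda>x. if x \<in> X then c else 1) A = measure lebesgue A - (1-c) * measure lebesgue (A \<inter> X)"
proof -
  have Af: "A \<in> lmeasurable" by (rule sub01[OF A(2,1)])
  have AXf: "A \<inter> X \<in> lmeasurable" using Af X by (rule fmeasurable_Int_fmeasurable)
  have eq: "(\<lambda>x. indicator A x *\<^sub>R (if x \<in> X then c else 1)) = (\<lambda>x. indicator A x - (1-c) * indicator (A \<inter> X) x)"
    by (auto simp: indicator_def fun_eq_iff)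
  have i1: "integrable lebesgue (indicator A :: real \<Rightarrow> real)" using Af
    by (simp only: lmeasurable_iff_integrable)
  have i2: "integrable lebesgue (indicator (A \<inter> X) :: real \<Rightarrow> real)" using AXf
    by (simp only: lmeasurable_iff_integrable)
  show ?thesis unfolding util_def set_lebesgue_integral_def eq
    using i1 i2 by (simp add: Bochner_Integration.integral_diff)
qed

lemma util_one:
  assumes A: "A \<in> sets lebesgue" "A \<subseteq> {0..1}"
  shows "util (\<lambda>_. 1) A = measure lebesgue A"
  using util_ind[OF A, of "{}" 0] by simp

lemma meas_disj:
  assumes "A \<in> sets lebesgue" "B \<in> sets lebesgue" "A \<subseteq> {0..1}" "B \<subseteq> {0..1}" "A \<inter> B = {}"
  shows "measure lebesgue (A \<union> B) = measure lebesgue A + measure lebesgue (B::real set)"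
proof -
  have "A \<in> lmeasurable" "B \<in> lmeasurable" using sub01[OF assms(3,1)] sub01[OF assms(4,2)] by auto
  moreover have "B - A = B" using assms(5) by blast
  ultimately show ?thesis using measure_Un2[of A lebesgue B] by simp
qed

lemma meas_sub:
  assumes "A \<in> sets lebesgue" "A \<subseteq> B" "B \<subseteq> {0..1}" "B \<in> sets lebesgue"
  shows "measure lebesgue A \<le> measure lebesgue (B::real set)"
proof -
  have "B \<in> lmeasurable" using sub01[OF assms(3,4)] .
  then show ?thesis using assms by (intro measure_mono_fmeasurable) auto
qed

lemma one_dom: "(\<lambda>_. 1::real) \<in> pc_domain"
  unfolding pc_domain_def piecewise_constant_01_def
  by (intro CollectI conjI exI[of _ "{0,1}"]) auto

lemma ind_dom:
  assumes "finite_union_of_intervals X" "c > 0"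
  shows "(\<lambda>x. if x \<in> X then c else 1) \<in> pc_domain"
  unfolding pc_domain_def using pc_ind[OF assms(1)] assms(2) by auto

theorem proposition3:
  fixes M :: mechanism and \<epsilon> :: real
  assumes "valid_mechanism pc_domain M"
    and "truthful pc_domain M"
    and "proportional pc_domain M"
    and "finite_union_of_intervals (fst (M (\<lambda>_. 1) (\<lambda>_. 1)))"
    and "finite_union_of_intervals (snd (M (\<lambda>_. 1) (\<lambda>_. 1)))"
    and "0 < \<epsilon>" and "\<epsilon> < 1/2"
  shows
    "let X1 = fst (M (\<lambda>_. 1) (\<lambda>_. 1)); X2 = snd (M (\<lambda>_. 1) (\<lambda>_. 1));
         f13 = (\<lambda>x. if x \<in> X1 then 1/2 else 1);
         f23 = (\<lambda>x. if x \<in> X1 then \<epsilon> else 1);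
         F3 = M f13 f23
     in measure lebesgue (fst F3 \<inter> X1) = 1/4 \<and> measure lebesgue (fst F3 \<inter> X2) = 1/4 \<and>
        measure lebesgue (snd F3 \<inter> X1) = 1/4 \<and> measure lebesgue (snd F3 \<inter> X2) = 1/4"
proof -
  have VM: "is_allocation (M f1 f2)" if "f1 \<in> pc_domain" "f2 \<in> pc_domain" for f1 f2
    using assms(1) that unfolding valid_mechanism_def by blast
  have PR: "util f1 (fst (M f1 f2)) \<ge> util f1 {0..1} / 2 \<and> util f2 (snd (M f1 f2)) \<ge> util f2 {0..1} / 2"
    if "f1 \<in> pc_domain" "f2 \<in> pc_domain" for f1 f2
    using assms(3) that unfolding proportional_def by blast
  have TR1: "util f1 (fst (M f1 f2)) \<ge> util f1 (fst (M f1' f2))"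
    if "f1 \<in> pc_domain" "f1' \<in> pc_domain" "f2 \<in> pc_domain" for f1 f1' f2
    using assms(2) that unfolding truthful_def by blast
  have TR2: "util f2 (snd (M f1 f2)) \<ge> util f2 (snd (M f1 f2'))"
    if "f1 \<in> pc_domain" "f2 \<in> pc_domain" "f2' \<in> pc_domain" for f1 f2 f2'
    using assms(2) that unfolding truthful_def by blast
  define m where "m = (measure lebesgue :: real set \<Rightarrow> real)"
  define one where "one = (\<lambda>_::real. 1::real)"
  define X1 where "X1 = fst (M one one)"
  define X2 where "X2 = snd (M one one)"
  define f13 where "f13 = (\<lambda>x. if x \<in> X1 then 1/2 else (1::real))"
  define f23 where "f23 = (\<lambda>x. if x \<in> X1 then \<epsilon> else (1::real))"
  define A where "A = fst (M f13 f23)"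
  define B where "B = snd (M f13 f23)"
  define C where "C = fst (M one f23)"
  define D where "D = snd (M one f23)"
  have d1: "one \<in> pc_domain" unfolding one_def by (rule one_dom)
  have d13: "f13 \<in> pc_domain" unfolding f13_def X1_def one_def using assms(4) by (intro ind_dom) auto
  have d23: "f23 \<in> pc_domain" unfolding f23_def X1_def one_def using assms(4,6) by (intro ind_dom) auto
  have X: "X1 \<in> sets lebesgue" "X2 \<in> sets lebesgue" "X1 \<subseteq> {0..1}" "X2 \<subseteq> {0..1}" "X1 \<inter> X2 = {}"
    using VM[OF d1 d1] unfolding X1_def X2_def is_allocation_def by auto
  have AB: "A \<in> sets lebesgue" "B \<in> sets lebesgue" "A \<subseteq> {0..1}" "B \<subseteq> {0..1}" "A \<inter> B = {}"
    using VM[OF d13 d23] unfolding A_def B_def is_allocation_def by auto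
  have CD: "C \<in> sets lebesgue" "D \<in> sets lebesgue" "C \<subseteq> {0..1}" "D \<subseteq> {0..1}" "C \<inter> D = {}"
    using VM[OF d1 d23] unfolding C_def D_def is_allocation_def by auto
  have I01: "{0..1::real} \<in> sets lebesgue" by simp
  have m01: "m {0..1} = 1" unfolding m_def by simp
  have uone: "util one Y = m Y" if "Y \<in> sets lebesgue" "Y \<subseteq> {0..1}" for Y
    unfolding one_def m_def using util_one[OF that] .
  have u13: "util f13 Y = m Y - (1 - 1/2) * m (Y \<inter> X1)" if "Y \<in> sets lebesgue" "Y \<subseteq> {0..1}" for Y
    unfolding f13_def m_def using util_ind[OF that X(1)] .
  have u23: "util f23 Y = m Y - (1 - \<epsilon>) * m (Y \<inter> X1)" if "Y \<in> sets lebesgue" "Y \<subseteq> {0..1}" for Y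
    unfolding f23_def m_def using util_ind[OF that X(1)] .
  have mX1: "m X1 \<ge> 1/2" using PR[OF d1 d1] uone[OF X(1,3)] uone[OF I01] m01 unfolding X1_def by simp
  have mX2: "m X2 \<ge> 1/2" using PR[OF d1 d1] uone[OF X(2,4)] uone[OF I01] m01 unfolding X2_def by simp
  have "m (X1 \<union> X2) = m X1 + m X2" unfolding m_def using X by (intro meas_disj) auto
  moreover have "m (X1 \<union> X2) \<le> m {0..1}" using X unfolding m_def by (intro meas_sub) auto
  ultimately have mX: "m X1 = 1/2" "m X2 = 1/2" using mX1 mX2 m01 by linarith+
  define N where "N = {0..1} - (X1 \<union> X2)"
  have N: "N \<in> sets lebesgue" "N \<subseteq> {0..1}" using X unfolding N_def by auto
  have "{0..1} = (X1 \<union> X2) \<union> N" unfolding N_def using X by auto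
  then have "m {0..1} = m ((X1 \<union> X2) \<union> N)" by (rule arg_cong)
  also have "\<dots> = m (X1 \<union> X2) + m N" unfolding m_def using X N unfolding N_def by (intro meas_disj) auto
  finally have mN: "m N = 0" using m01 \<open>m (X1 \<union> X2) = m X1 + m X2\<close> mX by linarith
  have split: "m Y = m (Y \<inter> X1) + m (Y \<inter> X2)" if Y: "Y \<in> sets lebesgue" "Y \<subseteq> {0..1}" for Y
  proof -
    have "Y = ((Y \<inter> X1) \<union> (Y \<inter> X2)) \<union> (Y \<inter> N)" using Y unfolding N_def by auto
    then have e0: "m Y = m (((Y \<inter> X1) \<union> (Y \<inter> X2)) \<union> (Y \<inter> N))" by (rule arg_cong)
    have e1: "m (((Y \<inter> X1) \<union> (Y \<inter> X2)) \<union> (Y \<inter> N)) = m ((Y \<inter> X1) \<union> (Y \<inter> X2)) + m (Y \<inter> N)"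
      unfolding m_def using X N Y by (intro meas_disj) (auto simp: N_def)
    have e2: "m (Y \<inter> N) = 0"
    proof -
      have "m (Y \<inter> N) \<le> m N" unfolding m_def using N Y by (intro meas_sub) auto
      moreover have "m (Y \<inter> N) \<ge> 0" unfolding m_def by simp
      ultimately show ?thesis using mN by linarith
    qed
    have e3: "m ((Y \<inter> X1) \<union> (Y \<inter> X2)) = m (Y \<inter> X1) + m (Y \<inter> X2)"
      unfolding m_def using X Y by (intro meas_disj) auto
    show ?thesis using e0 e1 e2 e3 by linarith
  qed
  have disjX: "m (A \<inter> X) + m (B \<inter> X) \<le> 1/2" if "X = X1 \<or> X = X2" for X
  proof -
    have XX: "X \<in> sets lebesgue" "X \<subseteq> {0..1}" "m X = 1/2" using that X mX by auto
    have "m (A \<inter> X) + m (B \<inter> X) = m ((A \<inter> X) \<union> (B \<inter> X))"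
      unfolding m_def using AB XX by (intro meas_disj[symmetric]) auto
    also have "\<dots> \<le> m X" unfolding m_def using AB XX by (intro meas_sub) auto
    finally show ?thesis using XX by simp
  qed
  have P1: "util f13 A \<ge> util f13 {0..1} / 2" using PR[OF d13 d23] unfolding A_def by simp
  have P2: "util f23 B \<ge> util f23 {0..1} / 2" using PR[OF d13 d23] unfolding B_def by simp
  have t1: "util one C \<ge> util one A" using TR1[OF d1 d13 d23] unfolding C_def A_def .
  have t2: "util f23 D \<ge> util f23 X2" using TR2[OF d1 d23 d1] unfolding D_def X2_def .
  have X21: "X2 \<inter> X1 = {}" using X by auto
  have "util f23 X2 = 1/2" using u23[OF X(2,4)] X21 mX by (simp add: m_def)
  moreover have "util f23 D \<le> m D" using u23[OF CD(2,4)] assms(7) measure_nonneg[of lebesgue "D \<inter> X1"]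
    unfolding m_def by (simp add: mult_nonneg_nonneg)
  moreover have "m C + m D \<le> 1"
  proof -
    have "m C + m D = m (C \<union> D)" unfolding m_def using CD by (intro meas_disj[symmetric]) auto
    also have "\<dots> \<le> m {0..1}" using CD unfolding m_def by (intro meas_sub) auto
    finally show ?thesis using m01 by simp
  qed
  ultimately have T: "m A \<le> 1/2" using t1 t2 uone[OF CD(1,3)] uone[OF AB(1,3)] by linarith
  have core: "m (A \<inter> X1) = 1/4 \<and> m (A \<inter> X2) = 1/4 \<and> m (B \<inter> X1) = 1/4 \<and> m (B \<inter> X2) = 1/4"
  proof (rule arith_core[OF _ _ _ _ _ assms(6,7)])
    show "(m (A \<inter> X1) + m (A \<inter> X2)) - (1 - 1/2) * m (A \<inter> X1) \<ge> (1 - (1 - 1/2) * (1/2)) / 2"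
      using P1 u13[OF AB(1,3)] u13[OF I01] split[OF AB(1,3)] mX X(3) m01 by (simp add: Int_absorb1)
    show "(m (B \<inter> X1) + m (B \<inter> X2)) - (1 - \<epsilon>) * m (B \<inter> X1) \<ge> (1 - (1 - \<epsilon>) * (1/2)) / 2"
      using P2 u23[OF AB(2,4)] u23[OF I01] split[OF AB(2,4)] mX X(3) m01 by (simp add: Int_absorb1)
    show "m (A \<inter> X1) + m (A \<inter> X2) \<le> 1/2" using T split[OF AB(1,3)] by simp
    show "m (A \<inter> X1) + m (B \<inter> X1) \<le> 1/2" using disjX[of X1] by simp
    show "m (A \<inter> X2) + m (B \<inter> X2) \<le> 1/2" using disjX[of X2] by simp
  qed
  show ?thesis unfolding Let_def using core[unfolded m_def A_def B_def f13_def f23_def X1_def X2_def one_def] .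
qed

end
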